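(* For all positive integers $n$ and $d$, there exists a family of $n\cdot d+1$ mass distributions in $\mathbb{R}^d$ that cannot be simultaneously bisected by any set of $n$ hyperplanes.
   Context: A mass distribution $\mu$ on $\mathbb{R}^d$ is a measure such that all open subsets are measurable, $0<\mu(\mathbb{R}^d)<\infty$, and $\mu(S)=0$ for every lower-dimensional subset $S$. For a finite set $\mathcal{L}$ of oriented hyperplanes, each $\ell\in\mathcal{L}$ has positive side $\ell^+=\{x:g(x)\ge 0\}$ for a defining affine function $g(x)=a_1x_1+\dots+a_dx_d+a_0$; hyperplanes at infinity ($g\equiv a_0\neq0$) are allowed, with $\ell^+=\mathbb{R}^d$, $\ell^-=\emptyset$. Let $\lambda(p)$ be the number of hyperplanes having $p$ on their positive side, $R^+=\{p:\lambda(p)\text{ even}\}$, $R^-=\{p:\lambda(p)\text{ odd}\}$. $\mathcal{L}$ simultaneously bisects $\mu_1,\dots,\mu_k$ if $\mu_i(R^+)=\mu_i(R^-)$ for all $i$; an unoriented set bisects if some orientation does. *)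

theory Defs
  imports "HOL-Analysis.Analysis"
begin

definition mass_distribution :: "'a::euclidean_space measure \<Rightarrow> bool" where
  "mass_distribution \<mu> \<longleftrightarrow>
     space \<mu> = UNIV \<and>
     (\<forall>U. open U \<longrightarrow> U \<in> sets \<mu>) \<and>
     0 < emeasure \<mu> UNIV \<and> emeasure \<mu> UNIV < \<infinity> \<and>
     (\<forall>S \<in> sets \<mu>. aff_dim S < int DIM('a) \<longrightarrow> emeasure \<mu> S = 0)"

text \<open>An oriented hyperplane is given by its defining affine function
  g(x) = a \<bullet> x + a0, encoded as the pair (a, a0) with (a, a0) \<noteq> (0, 0).
  If a = 0 it is a hyperplane at infinity.\<close>
definition oriented_hyperplane :: "'a::euclidean_space \<times> real \<Rightarrow> bool" where
  "oriented_hyperplane h \<longleftrightarrow> h \<noteq> (0, 0)"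

definition pos_side :: "'a::euclidean_space \<times> real \<Rightarrow> 'a set" where
  "pos_side h = {x. fst h \<bullet> x + snd h \<ge> 0}"

definition pos_count :: "('a::euclidean_space \<times> real) list \<Rightarrow> 'a \<Rightarrow> nat" where
  "pos_count L p = length (filter (\<lambda>h. p \<in> pos_side h) L)"

definition R_plus :: "('a::euclidean_space \<times> real) list \<Rightarrow> 'a set" where
  "R_plus L = {p. even (pos_count L p)}"

definition R_minus :: "('a::euclidean_space \<times> real) list \<Rightarrow> 'a set" where
  "R_minus L = {p. odd (pos_count L p)}"

definition simul_bisects ::
  "('a::euclidean_space \<times> real) list \<Rightarrow> (nat \<Rightarrow> 'a measure) \<Rightarrow> nat set \<Rightarrow> bool" where
  "simul_bisects L \<mu> I \<longleftrightarrow>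
     (\<forall>i\<in>I. emeasure (\<mu> i) (R_plus L) = emeasure (\<mu> i) (R_minus L))"

end

theory Submission
  imports Defs
begin

lemma lowdim_negligible:
  fixes S :: "'a::euclidean_space set"
  assumes "aff_dim S < int DIM('a)"
  shows "negligible S"
proof (cases "S = {}")
  case True then show ?thesis by simp
next
  case False
  then obtain a where a: "a \<in> S" by auto
  then have "a \<in> affine hull S" by (simp add: hull_inc)
  then have "aff_dim S = int (dim ((+) (- a) ` S))" by (rule aff_dim_eq_dim)
  with assms have "dim ((+) (- a) ` S) < DIM('a)" by simp
  then have "negligible ((+) (- a) ` S)" by (rule negligible_lowdim)
  then have "negligible ((+) a ` (+) (- a) ` S)" by (rule negligible_translation)
  moreover have "(+) a ` (+) (- a) ` S = S" by (auto simp: image_image image_iff)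
  ultimately show ?thesis by simp
qed

lemma gen_pos:
  "\<exists>c::nat \<Rightarrow> 'a::euclidean_space. inj_on c {..<m} \<and>
     (\<forall>T \<subseteq> {..<m}. card T \<le> DIM('a) + 1 \<longrightarrow> \<not> affine_dependent (c ` T))"
proof (induction m)
  case 0
  then show ?case by auto
next
  case (Suc m)
  then obtain c :: "nat \<Rightarrow> 'a" where inj: "inj_on c {..<m}" and
    ind: "\<forall>T \<subseteq> {..<m}. card T \<le> DIM('a) + 1 \<longrightarrow> \<not> affine_dependent (c ` T)" by blast
  define U where "U = (\<Union>T \<in> {T. T \<subseteq> {..<m} \<and> card T \<le> DIM('a)}. affine hull (c ` T))"
  have "negligible U"
    unfolding U_def
  proof (rule negligible_Union)
    show "finite ((\<lambda>T. affine hull (c ` T)) ` {T. T \<subseteq> {..<m} \<and> card T \<le> DIM('a)})"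
      by simp
  next
    fix X assume "X \<in> (\<lambda>T. affine hull (c ` T)) ` {T. T \<subseteq> {..<m} \<and> card T \<le> DIM('a)}"
    then obtain T where T: "T \<subseteq> {..<m}" "card T \<le> DIM('a)" and X: "X = affine hull (c ` T)" by auto
    have fin: "finite T" using T finite_subset by blast
    have "aff_dim (c ` T) \<le> int (card (c ` T)) - 1" using aff_dim_le_card[of "c ` T"] fin by simp
    also have "\<dots> \<le> int (card T) - 1" using card_image_le[OF fin, of c] by simp
    finally have "aff_dim X < int DIM('a)" using X T by simp
    then show "negligible X" by (rule lowdim_negligible)
  qed
  then have "U \<noteq> UNIV" by auto
  then obtain q where q: "q \<notin> U" by auto
  define c' where "c' = c(m := q)"
  have qc: "q \<noteq> c j" if "j < m" for j
  proof
    assume "q = c j"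
    then have "q \<in> affine hull (c ` {j})" by (simp add: hull_inc)
    moreover have "{j} \<in> {T. T \<subseteq> {..<m} \<and> card T \<le> DIM('a)}" using that DIM_positive[where 'a='a] by simp
    ultimately show False using q unfolding U_def by blast
  qed
  have "inj_on c' {..<Suc m}"
    using inj qc unfolding c'_def inj_on_def by (auto simp: less_Suc_eq) (metis)+
  moreover have "\<not> affine_dependent (c' ` T)" if T: "T \<subseteq> {..<Suc m}" "card T \<le> DIM('a) + 1" for T
  proof (cases "m \<in> T")
    case False
    then have "T \<subseteq> {..<m}" using T by (auto simp: less_Suc_eq)
    moreover have "c' ` T = c ` T" using False unfolding c'_def by auto
    ultimately show ?thesis using ind T by simp
  next
    case True
    define T' where "T' = T - {m}"
    have fin: "finite T" using T finite_subset by blast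
    have T': "T' \<subseteq> {..<m}" using T unfolding T'_def by (auto simp: less_Suc_eq)
    have cT': "card T' \<le> DIM('a)" using T True fin unfolding T'_def by simp
    have "c' ` T = insert q (c ` T')" using True unfolding c'_def T'_def by auto
    moreover have "\<not> affine_dependent (c ` T')" using ind T' cT' by simp
    moreover have "q \<notin> affine hull (c ` T')" using q T' cT' unfolding U_def by blast
    ultimately show ?thesis by (simp add: affine_independent_insert)
  qed
  ultimately show ?case by blast
qed


lemma full_hull:
  fixes c :: "nat \<Rightarrow> 'a::euclidean_space"
  assumes inj: "inj_on c {..<m}"
    and ind: "\<forall>T \<subseteq> {..<m}. card T \<le> DIM('a) + 1 \<longrightarrow> \<not> affine_dependent (c ` T)"
    and T: "T \<subseteq> {..<m}" "card T = DIM('a) + 1"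
  shows "affine hull (c ` T) = UNIV"
proof -
  have "inj_on c T" using inj T inj_on_subset by blast
  then have "card (c ` T) = DIM('a) + 1" using T by (simp add: card_image)
  moreover have "\<not> affine_dependent (c ` T)" using ind T by simp
  ultimately have "aff_dim (c ` T) = int DIM('a)"
    using aff_dim_affine_independent[of "c ` T"] by simp
  then show ?thesis using aff_dim_eq_full by blast
qed

lemma pos_side_closed: "closed (pos_side h)"
proof -
  have "pos_side h = {x. fst h \<bullet> x \<ge> - snd h}" unfolding pos_side_def by auto
  then show ?thesis by (simp add: closed_halfspace_ge)
qed

lemma pos_count_borel: "{p. P (pos_count L p)} \<in> sets borel"
proof (induction L arbitrary: P)
  case Nil
  then show ?case by (cases "P 0") (auto simp: pos_count_def)
next
  case (Cons h L)
  have "{p. P (pos_count (h # L) p)} =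
      (pos_side h \<inter> {p. P (Suc (pos_count L p))}) \<union> (- pos_side h \<inter> {p. P (pos_count L p)})"
    by (auto simp: pos_count_def)
  moreover have "pos_side h \<in> sets borel" using pos_side_closed[of h] by (rule borel_closed)
  moreover have "- pos_side h \<in> sets borel" using pos_side_closed[of h] by (intro borel_open) (simp add: open_Compl)
  ultimately show ?case using Cons.IH[of "\<lambda>k. P (Suc k)"] Cons.IH[of P] by auto
qed

lemma emeasure_dens:
  assumes "A \<in> sets borel" and that: "B \<in> sets borel"
  shows "emeasure (density lborel (indicator B)) A = emeasure lborel (B \<inter> A)"
proof -
  have "emeasure (density lborel (indicator B)) A = (\<integral>\<^sup>+ x. indicator B x * indicator A x \<partial>lborel)"
    using assms that by (simp add: emeasure_density)
  also have "\<dots> = (\<integral>\<^sup>+ x. indicator (B \<inter> A) x \<partial>lborel)"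
    by (simp add: indicator_inter_arith)
  also have "\<dots> = emeasure lborel (B \<inter> A)" using assms that by simp
  finally show ?thesis .
qed

lemma ball_pos: "(0::real) < r \<Longrightarrow> 0 < emeasure lborel (ball (c::'a::euclidean_space) r)"
  using content_ball_pos[of r c] emeasure_lborel_ball_finite[of c r]
  by (metis Sigma_Algebra.measure_def enn2real_positive_iff infinity_ennreal_def)

lemma mass_ball:
  fixes c :: "'a::euclidean_space"
  assumes "r > 0"
  shows "mass_distribution (density lborel (indicator (ball c r)))"
  unfolding mass_distribution_def
proof (intro conjI ballI allI impI)
  show "space (density lborel (indicator (ball c r))) = UNIV" by simp
next
  fix U :: "'a set" assume "open U" then show "U \<in> sets (density lborel (indicator (ball c r)))" unfolding sets_density sets_lborel by (rule borel_open)
next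
  show "0 < emeasure (density lborel (indicator (ball c r))) UNIV"
    using emeasure_dens[of UNIV "ball c r"] ball_pos[OF assms, of c] by simp
next
  show "emeasure (density lborel (indicator (ball c r))) UNIV < \<infinity>"
    using emeasure_dens[of UNIV "ball c r"] emeasure_lborel_ball_finite[of c r] by simp
next
  fix S assume S: "S \<in> sets (density lborel (indicator (ball c r)))" and "aff_dim S < int DIM('a)"
  then have "negligible S" by (simp add: lowdim_negligible)
  then have "S \<in> null_sets lebesgue" by (simp add: negligible_iff_null_sets)
  moreover have Sb: "S \<in> sets borel" using S by simp
  ultimately have "emeasure lborel S = 0"
    using null_sets_completion_iff[of S lborel] by (simp add: null_setsD1)
  then have "emeasure lborel (ball c r \<inter> S) = 0"
    using emeasure_mono[of "ball c r \<inter> S" S lborel] Sb by simp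
  then show "emeasure (density lborel (indicator (ball c r))) S = 0"
    using emeasure_dens[OF Sb, of "ball c r"] by simp
qed


lemma nonbisect:
  fixes c :: "'a::euclidean_space"
  assumes r: "r > 0"
    and nc: "\<forall>h\<in>set L. \<forall>x\<in>ball c r. \<forall>y\<in>ball c r. x \<in> pos_side h \<longrightarrow> y \<in> pos_side h"
  shows "emeasure (density lborel (indicator (ball c r))) (R_plus L) \<noteq>
         emeasure (density lborel (indicator (ball c r))) (R_minus L)"
proof -
  have cb: "c \<in> ball c r" using r by simp
  have pc: "pos_count L x = pos_count L c" if "x \<in> ball c r" for x
    unfolding pos_count_def
    by (rule arg_cong[where f=length], rule filter_cong) (use nc that cb in blast)+
  have Rp: "R_plus L \<in> sets borel" unfolding R_plus_def by (rule pos_count_borel)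
  have Rm: "R_minus L \<in> sets borel" unfolding R_minus_def by (rule pos_count_borel)
  have bb: "ball c r \<in> sets borel" by simp
  have pos: "0 < emeasure lborel (ball c r)" using ball_pos[OF r] .
  show ?thesis
  proof (cases "even (pos_count L c)")
    case True
    then have "ball c r \<inter> R_plus L = ball c r" "ball c r \<inter> R_minus L = {}"
      using pc unfolding R_plus_def R_minus_def by auto
    then show ?thesis using emeasure_dens[OF Rp bb] emeasure_dens[OF Rm bb] pos by simp
  next
    case False
    then have "ball c r \<inter> R_plus L = {}" "ball c r \<inter> R_minus L = ball c r"
      using pc unfolding R_plus_def R_minus_def by auto
    then show ?thesis using emeasure_dens[OF Rp bb] emeasure_dens[OF Rm bb] pos by simp
  qed
qed

lemma near:
  fixes c :: "'a::euclidean_space"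
  assumes "x \<in> ball c r" "y \<in> ball c r" "x \<in> pos_side h" "y \<notin> pos_side h"
  shows "fst h \<noteq> 0 \<and> \<bar>fst h \<bullet> c + snd h\<bar> < r * norm (fst h)"
proof -
  obtain a b where h: "h = (a, b)" by (cases h)
  have x: "a \<bullet> x + b \<ge> 0" and y: "a \<bullet> y + b < 0" using assms unfolding pos_side_def h by auto
  have a0: "a \<noteq> 0" using x y by auto
  have na: "norm a > 0" using a0 by simp
  have "\<bar>a \<bullet> (x - c)\<bar> \<le> norm a * norm (x - c)" by (rule Cauchy_Schwarz_ineq2)
  also have "\<dots> < norm a * r" using assms(1) na by (simp add: dist_norm norm_minus_commute)
  finally have 1: "\<bar>a \<bullet> (x - c)\<bar> < norm a * r" .
  have "\<bar>a \<bullet> (y - c)\<bar> \<le> norm a * norm (y - c)" by (rule Cauchy_Schwarz_ineq2)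
  also have "\<dots> < norm a * r" using assms(2) na by (simp add: dist_norm norm_minus_commute)
  finally have 2: "\<bar>a \<bullet> (y - c)\<bar> < norm a * r" .
  have n1: "a \<bullet> (x - c) < r * norm a" using 1 by (simp add: mult.commute abs_less_iff)
  have n2: "- (a \<bullet> (y - c)) < r * norm a" using 2 by (simp add: mult.commute abs_less_iff)
  have e1: "a \<bullet> c + b = (a \<bullet> x + b) - a \<bullet> (x - c)" by (simp add: inner_diff_right)
  have e2: "a \<bullet> c + b = (a \<bullet> y + b) - a \<bullet> (y - c)" by (simp add: inner_diff_right)
  have "- (r * norm a) < a \<bullet> c + b" using e1 n1 x by linarith
  moreover have "a \<bullet> c + b < r * norm a" using e2 n2 y by linarith
  ultimately have "\<bar>a \<bullet> c + b\<bar> < r * norm a" by (simp add: abs_less_iff)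
  then show ?thesis using a0 h by simp
qed

lemma compact_min:
  fixes c :: "nat \<Rightarrow> 'a::euclidean_space"
  assumes fin: "finite T" and full: "affine hull (c ` T) = UNIV"
  shows "\<exists>m>0. \<forall>a b. norm a = 1 \<longrightarrow> \<bar>b\<bar> \<le> B \<longrightarrow> m \<le> (\<Sum>i\<in>T. \<bar>a \<bullet> c i + b\<bar>)"
proof -
  define K :: "('a \<times> real) set" where "K = sphere 0 1 \<times> cball 0 B"
  define f where "f = (\<lambda>p::'a \<times> real. \<Sum>i\<in>T. \<bar>fst p \<bullet> c i + snd p\<bar>)"
  have K: "(a, b) \<in> K \<longleftrightarrow> norm a = 1 \<and> \<bar>b\<bar> \<le> B" for a b
    unfolding K_def by (auto simp: dist_real_def)
  show ?thesis
  proof (cases "K = {}")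
    case True
    show ?thesis
    proof (intro exI[of _ 1] conjI allI impI)
      fix a b assume "norm (a::'a) = 1" "\<bar>b\<bar> \<le> B"
      then have "(a, b) \<in> K" using K by blast
      then show "1 \<le> (\<Sum>i\<in>T. \<bar>a \<bullet> c i + b\<bar>)" using True by simp
    qed simp
  next
    case False
    have "compact K" unfolding K_def by (intro compact_Times) auto
    moreover have "continuous_on K f" unfolding f_def by (intro continuous_intros)
    ultimately obtain p0 where p0: "p0 \<in> K" and minp: "\<forall>y\<in>K. f p0 \<le> f y"
      using continuous_attains_inf[of K f] False by blast
    obtain a0 b0 where p0e: "p0 = (a0, b0)" by (cases p0)
    have na0: "norm a0 = 1" using p0 K p0e by blast
    have "f p0 > 0"
    proof (rule ccontr)
      assume "\<not> f p0 > 0"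
      moreover have "f p0 \<ge> 0" unfolding f_def by (simp add: sum_nonneg)
      ultimately have "f p0 = 0" by simp
      then have z: "\<forall>i\<in>T. a0 \<bullet> c i + b0 = 0"
        unfolding f_def p0e using sum_nonneg_eq_0_iff[OF fin, of "\<lambda>i. \<bar>a0 \<bullet> c i + b0\<bar>"] by simp
      have "c ` T \<subseteq> {x. a0 \<bullet> x = - b0}" using z by (auto simp: algebra_simps)
      then have "affine hull (c ` T) \<subseteq> {x. a0 \<bullet> x = - b0}"
        by (intro hull_minimal) (auto simp: affine_hyperplane)
      then have "UNIV \<subseteq> {x. a0 \<bullet> x = - b0}" using full by simp
      then have "a0 \<bullet> 0 = - b0" "a0 \<bullet> a0 = - b0" by blast+
      then have "a0 = 0" by simp
      then show False using na0 by simp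
    qed
    show ?thesis
    proof (intro exI[of _ "f p0"] conjI allI impI)
      fix a b assume "norm (a::'a) = 1" "\<bar>b\<bar> \<le> B"
      then have "(a, b) \<in> K" using K by blast
      then have "f p0 \<le> f (a, b)" using minp by blast
      then show "f p0 \<le> (\<Sum>i\<in>T. \<bar>a \<bullet> c i + b\<bar>)" unfolding f_def by simp
    qed fact
  qed
qed

lemma pigeon:
  assumes "finite A" "finite B" "f ` A \<subseteq> B" "card B * d < card A"
  shows "\<exists>b\<in>B. d < card {a\<in>A. f a = b}"
proof (rule ccontr)
  assume "\<not> ?thesis"
  then have le: "\<forall>b\<in>B. card {a\<in>A. f a = b} \<le> d" by auto
  have "card A = (\<Sum>x\<in>A. 1::nat)" by simp
  also have "\<dots> = (\<Sum>b\<in>B. \<Sum>x\<in>{a\<in>A. f a = b}. 1)"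
    using sum.group[OF assms(1) assms(2) assms(3), of "\<lambda>_. 1::nat"] by simp
  also have "\<dots> = (\<Sum>b\<in>B. card {a\<in>A. f a = b})" by simp
  also have "\<dots> \<le> (\<Sum>b\<in>B. d)" using le by (intro sum_mono) auto
  also have "\<dots> = card B * d" by simp
  finally show False using assms(4) by simp
qed


theorem mainTheorem9:
  fixes n :: nat
  assumes "n > 0"
  shows "\<exists>\<mu> :: nat \<Rightarrow> 'a::euclidean_space measure.
           (\<forall>i < n * DIM('a) + 1. mass_distribution (\<mu> i)) \<and>
           (\<forall>L. length L = n \<longrightarrow> (\<forall>h \<in> set L. oriented_hyperplane h) \<longrightarrow>
                \<not> simul_bisects L \<mu> {..< n * DIM('a) + 1})"
proof -
  define d where "d = DIM('a)"
  define N where "N = n * d + 1"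
  obtain c :: "nat \<Rightarrow> 'a" where inj: "inj_on c {..<N}" and
    ind: "\<forall>T \<subseteq> {..<N}. card T \<le> DIM('a) + 1 \<longrightarrow> \<not> affine_dependent (c ` T)"
    using gen_pos by blast
  define R where "R = (\<Sum>i<N. norm (c i))"
  have Rle: "norm (c i) \<le> R" if "i < N" for i
    unfolding R_def using that by (intro member_le_sum) auto
  define Ts where "Ts = {T. T \<subseteq> {..<N} \<and> card T = d + 1}"
  have finTs: "finite Ts" unfolding Ts_def by simp
  have "\<forall>T\<in>Ts. \<exists>m>0. \<forall>a b. norm a = 1 \<longrightarrow> \<bar>b\<bar> \<le> R + 1 \<longrightarrow> m \<le> (\<Sum>i\<in>T. \<bar>a \<bullet> c i + b\<bar>)"
  proof
    fix T assume T: "T \<in> Ts"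
    then have fin: "finite T" unfolding Ts_def using finite_subset by blast
    have "affine hull (c ` T) = UNIV"
      using full_hull[OF inj ind] T unfolding Ts_def d_def by blast
    then show "\<exists>m>0. \<forall>a b. norm a = 1 \<longrightarrow> \<bar>b\<bar> \<le> R + 1 \<longrightarrow> m \<le> (\<Sum>i\<in>T. \<bar>a \<bullet> c i + b\<bar>)"
      using compact_min[OF fin] by blast
  qed
  then obtain mT where mTall: "\<forall>T\<in>Ts. mT T > 0 \<and> (\<forall>a b. norm a = 1 \<longrightarrow> \<bar>b\<bar> \<le> R + 1 \<longrightarrow> mT T \<le> (\<Sum>i\<in>T. \<bar>a \<bullet> c i + b\<bar>))"
    by (rule bchoice[THEN exE]) blast
  have mT: "\<And>T. T \<in> Ts \<Longrightarrow> mT T > 0" using mTall by blast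
  have mTle: "\<And>T a b. T \<in> Ts \<Longrightarrow> norm a = 1 \<Longrightarrow> \<bar>b\<bar> \<le> R + 1 \<Longrightarrow> mT T \<le> (\<Sum>i\<in>T. \<bar>a \<bullet> c i + b\<bar>)"
    using mTall by blast
  define r where "r = Min (insert 1 ((\<lambda>T. mT T / (d + 1)) ` Ts))"
  have r0: "r > 0" unfolding r_def using finTs mT by (auto simp: Min_gr_iff)
  have r1: "r \<le> 1" unfolding r_def using finTs by simp
  have rT: "r \<le> mT T / (d + 1)" if "T \<in> Ts" for T
    unfolding r_def using finTs that by simp
  define \<mu> where "\<mu> = (\<lambda>i. density lborel (indicator (ball (c i) r)) :: 'a measure)"
  show ?thesis
  proof (intro exI[of _ \<mu>] conjI allI impI notI)
    fix i assume "i < n * DIM('a) + 1"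
    show "mass_distribution (\<mu> i)" unfolding \<mu>_def using mass_ball[OF r0] .
  next
    fix L :: "('a \<times> real) list"
    assume lenL: "length L = n" and bis: "simul_bisects L \<mu> {..< n * DIM('a) + 1}"
    have cross: "\<exists>h\<in>set L. \<exists>x\<in>ball (c i) r. \<exists>y\<in>ball (c i) r. x \<in> pos_side h \<and> y \<notin> pos_side h"
      if "i < N" for i
    proof (rule ccontr)
      assume "\<not> ?thesis"
      then have "\<forall>h\<in>set L. \<forall>x\<in>ball (c i) r. \<forall>y\<in>ball (c i) r. x \<in> pos_side h \<longrightarrow> y \<in> pos_side h"
        by blast
      from nonbisect[OF r0 this] show False
        using bis that unfolding simul_bisects_def \<mu>_def N_def d_def by auto
    qed
    then have "\<forall>i. \<exists>h. i < N \<longrightarrow> h \<in> set L \<and> (\<exists>x\<in>ball (c i) r. \<exists>y\<in>ball (c i) r. x \<in> pos_side h \<and> y \<notin> pos_side h)"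
      by blast
    then obtain g where gall: "\<forall>i. i < N \<longrightarrow> g i \<in> set L \<and> (\<exists>x\<in>ball (c i) r. \<exists>y\<in>ball (c i) r. x \<in> pos_side (g i) \<and> y \<notin> pos_side (g i))"
      by (rule choice[THEN exE]) blast
    have g: "\<And>i. i < N \<Longrightarrow> g i \<in> set L \<and> (\<exists>x\<in>ball (c i) r. \<exists>y\<in>ball (c i) r. x \<in> pos_side (g i) \<and> y \<notin> pos_side (g i))"
      using gall by blast
    have "card (set L) * d \<le> n * d" using lenL card_length[of L] by simp
    then have "card (set L) * d < card {..<N}" unfolding N_def card_lessThan by linarith
    then obtain h where hL: "h \<in> set L" and big: "d < card {i\<in>{..<N}. g i = h}"
    proof -
      have "g ` {..<N} \<subseteq> set L" using g by auto
      from pigeon[of "{..<N}" "set L" g d, OF _ _ this] \<open>card (set L) * d < card {..<N}\<close>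
      show ?thesis using that by auto
    qed
    then obtain T where TS: "T \<subseteq> {i\<in>{..<N}. g i = h}" and cT: "card T = d + 1"
    proof -
      have "d + 1 \<le> card {i\<in>{..<N}. g i = h}" using big by simp
      then show ?thesis using obtain_subset_with_card_n[of "d + 1" "{i\<in>{..<N}. g i = h}"] that by blast
    qed
    have TTs: "T \<in> Ts" using TS cT unfolding Ts_def by auto
    have finT: "finite T" by (rule finite_subset[OF TS]) simp
    have near_i: "fst h \<noteq> 0 \<and> \<bar>fst h \<bullet> c i + snd h\<bar> < r * norm (fst h)" if "i \<in> T" for i
      using g[of i] TS that near by blast
    obtain i0 where i0: "i0 \<in> T" using cT by (cases "T = {}") auto
    have a0: "fst h \<noteq> 0" using near_i[OF i0] by blast
    define a where "a = fst h /\<^sub>R norm (fst h)"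
    define b where "b = snd h / norm (fst h)"
    have na: "norm a = 1" unfolding a_def using a0 by simp
    have ab: "\<bar>a \<bullet> c i + b\<bar> < r" if "i \<in> T" for i
    proof -
      have "a \<bullet> c i + b = (fst h \<bullet> c i + snd h) / norm (fst h)"
        unfolding a_def b_def by (simp add: add_divide_distrib divide_inverse algebra_simps)
      then have "\<bar>a \<bullet> c i + b\<bar> = \<bar>fst h \<bullet> c i + snd h\<bar> / norm (fst h)" by simp
      also have "\<dots> < r" using near_i[OF that] a0 by (simp add: divide_less_eq)
      finally show ?thesis .
    qed
    have "\<bar>a \<bullet> c i0\<bar> \<le> norm (c i0)"
      using Cauchy_Schwarz_ineq2[of a "c i0"] na by simp
    moreover have "norm (c i0) \<le> R" using Rle i0 TS by auto
    ultimately have bR: "\<bar>b\<bar> \<le> R + 1" using ab[OF i0] r1 by linarith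
    have "mT T \<le> (\<Sum>i\<in>T. \<bar>a \<bullet> c i + b\<bar>)" using mTle[OF TTs na bR] .
    also have "\<dots> < (\<Sum>i\<in>T. r)" using finT i0 ab by (intro sum_strict_mono) auto
    also have "\<dots> = (d + 1) * r" using cT by simp
    also have "\<dots> \<le> mT T" using rT[OF TTs] by (simp add: field_simps)
    finally show False by simp
  qed
qed

end
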